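(* Let $K$ be an algebraically closed field of characteristic $2$, let $B\in K[x_1,x_2,x_3]$ be a homogeneous polynomial of degree $4$, and let $$\mathcal{C}_B=\{x\in\mathbb{P}^2_K \mid \nabla B(x)=0\}=\{B_1=B_2=B_3=0\}$$ be its critical locus, where $B_i=\partial B/\partial x_i$. If $\mathcal{C}_B$ is finite, then it consists of at most $7$ points. Moreover, for a general $B$ (i.e. for $B$ in a nonempty Zariski open subset of the space of quartic forms), $\mathcal{C}_B$ consists of exactly $7$ reduced points. *)

theory Defs
  imports "HOL-Computational_Algebra.Polynomial"
begin

text \<open>Points of K^3 are triples. A homogeneous form of degree d in x1,x2,x3 is
  represented by its coefficient function on exponent triples (a,b,c),
  supported on the monomials of total degree d.\<close>

type_synonym 'a coeffs = "nat \<times> nat \<times> nat \<Rightarrow> 'a"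

definition monomials :: "nat \<Rightarrow> (nat \<times> nat \<times> nat) set" where
  "monomials d = {(a,b,c). a \<le> d \<and> b \<le> d \<and> c \<le> d \<and> a + b + c = d}"

definition homog_form :: "nat \<Rightarrow> 'a::zero coeffs \<Rightarrow> bool" where
  "homog_form d B \<longleftrightarrow> (\<forall>m. m \<notin> monomials d \<longrightarrow> B m = 0)"

definition eval_form :: "nat \<Rightarrow> 'a::comm_ring_1 coeffs \<Rightarrow> 'a \<times> 'a \<times> 'a \<Rightarrow> 'a" where
  "eval_form d B p = (case p of (x,y,z) \<Rightarrow>
     (\<Sum>(a,b,c)\<in>monomials d. B (a,b,c) * x ^ a * y ^ b * z ^ c))"

definition pderiv3 :: "nat \<Rightarrow> 'a::comm_ring_1 coeffs \<Rightarrow> 'a coeffs" where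
  "pderiv3 i B = (\<lambda>(a,b,c).
     if i = 0 then of_nat (Suc a) * B (Suc a, b, c)
     else if i = 1 then of_nat (Suc b) * B (a, Suc b, c)
     else of_nat (Suc c) * B (a, b, Suc c))"

definition coord :: "nat \<Rightarrow> 'a \<times> 'a \<times> 'a \<Rightarrow> 'a" where
  "coord i p = (case p of (x,y,z) \<Rightarrow> if i = 0 then x else if i = 1 then y else z)"

definition smult3 :: "'a::times \<Rightarrow> 'a \<times> 'a \<times> 'a \<Rightarrow> 'a \<times> 'a \<times> 'a" where
  "smult3 t p = (case p of (x,y,z) \<Rightarrow> (t * x, t * y, t * z))"

definition proj_point :: "'a::field \<times> 'a \<times> 'a \<Rightarrow> ('a \<times> 'a \<times> 'a) set" where
  "proj_point v = {smult3 t v | t. t \<noteq> 0}"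

text \<open>Affine cone over the critical locus: nonzero common zeros of B_1, B_2, B_3
  (here B is a quartic, so the B_i are cubic forms).\<close>
definition crit_cone :: "'a::field coeffs \<Rightarrow> ('a \<times> 'a \<times> 'a) set" where
  "crit_cone B = {v. v \<noteq> (0,0,0) \<and> (\<forall>i<3. eval_form 3 (pderiv3 i B) v = 0)}"

definition crit_locus :: "'a::field coeffs \<Rightarrow> ('a \<times> 'a \<times> 'a) set set" where
  "crit_locus B = proj_point ` crit_cone B"

text \<open>Reducedness of the point [v] of the scheme {B_1 = B_2 = B_3 = 0}: its Zariski tangent
  space is zero, i.e. the kernel of the Jacobian matrix (B_ij(v)) of (B_1,B_2,B_3) at v
  is exactly the line spanned by v (the affine cone direction).\<close>
definition reduced_crit_point :: "'a::field coeffs \<Rightarrow> 'a \<times> 'a \<times> 'a \<Rightarrow> bool" where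
  "reduced_crit_point B v \<longleftrightarrow>
     {w. \<forall>i<3. (\<Sum>j<3. eval_form 2 (pderiv3 j (pderiv3 i B)) v * coord j w) = 0}
       = {smult3 t v | t. True}"

text \<open>Polynomial functions on the space of quartic forms (coordinates: the 15 coefficients).
  A nonempty Zariski open set contains a nonempty basic open set {P \<noteq> 0}.\<close>
inductive_set quartic_poly_funs :: "('a::comm_ring_1 coeffs \<Rightarrow> 'a) set" where
  const: "(\<lambda>B. c) \<in> quartic_poly_funs"
| var: "m \<in> monomials 4 \<Longrightarrow> (\<lambda>B. B m) \<in> quartic_poly_funs"
| add: "P \<in> quartic_poly_funs \<Longrightarrow> Q \<in> quartic_poly_funs \<Longrightarrow> (\<lambda>B. P B + Q B) \<in> quartic_poly_funs"
| mult: "P \<in> quartic_poly_funs \<Longrightarrow> Q \<in> quartic_poly_funs \<Longrightarrow> (\<lambda>B. P B * Q B) \<in> quartic_poly_funs"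

end

theory Submission
  imports Defs
begin
lemma mon3: "monomials 3 = {(0,0,3),(0,1,2),(0,2,1),(0,3,0),(1,0,2),(1,1,1),(1,2,0),(2,0,1),(2,1,0),(3,0,0)}"
proof (rule set_eqI, clarify)
  fix a b c :: nat
  show "(a,b,c) \<in> monomials 3 \<longleftrightarrow> (a,b,c) \<in> {(0,0,3),(0,1,2),(0,2,1),(0,3,0),(1,0,2),(1,1,1),(1,2,0),(2,0,1),(2,1,0),(3,0,0)}"
  proof
    assume "(a,b,c) \<in> monomials 3"
    hence h: "a + b + c = 3" by (simp add: monomials_def)
    hence "a = 0 \<or> a = 1 \<or> a = 2 \<or> a = 3" "b = 0 \<or> b = 1 \<or> b = 2 \<or> b = 3" by arith+
    thus "(a,b,c) \<in> {(0,0,3),(0,1,2),(0,2,1),(0,3,0),(1,0,2),(1,1,1),(1,2,0),(2,0,1),(2,1,0),(3,0,0)}"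
      using h by (elim disjE) simp_all
  next
    assume "(a,b,c) \<in> {(0,0,3),(0,1,2),(0,2,1),(0,3,0),(1,0,2),(1,1,1),(1,2,0),(2,0,1),(2,1,0),(3,0,0)}"
    thus "(a,b,c) \<in> monomials 3" unfolding monomials_def by (elim insertE) auto
  qed
qed

lemma mon2: "monomials 2 = {(0,0,2),(0,1,1),(0,2,0),(1,0,1),(1,1,0),(2,0,0)}"
proof (rule set_eqI, clarify)
  fix a b c :: nat
  show "(a,b,c) \<in> monomials 2 \<longleftrightarrow> (a,b,c) \<in> {(0,0,2),(0,1,1),(0,2,0),(1,0,1),(1,1,0),(2,0,0)}"
  proof
    assume "(a,b,c) \<in> monomials 2"
    hence h: "a + b + c = 2" by (simp add: monomials_def)
    hence "a = 0 \<or> a = 1 \<or> a = 2" "b = 0 \<or> b = 1 \<or> b = 2" by arith+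
    thus "(a,b,c) \<in> {(0,0,2),(0,1,1),(0,2,0),(1,0,1),(1,1,0),(2,0,0)}"
      using h by (elim disjE) simp_all
  next
    assume "(a,b,c) \<in> {(0,0,2),(0,1,1),(0,2,0),(1,0,1),(1,1,0),(2,0,0)}"
    thus "(a,b,c) \<in> monomials 2" unfolding monomials_def by (elim insertE) auto
  qed
qed

lemma char2_two: "CHAR('a::comm_ring_1) = 2 \<Longrightarrow> (2::'a) = 0"
  using of_nat_eq_0_iff_char_dvd[of 2, where 'a='a] by simp

lemma char2_neg: "CHAR('a::comm_ring_1) = 2 \<Longrightarrow> - (x::'a) = x"
proof -
  assume "CHAR('a) = 2"
  hence "(2::'a) = 0" by (rule char2_two)
  hence "x + x = 0" by (metis mult_2 mult_zero_left)
  thus ?thesis by (simp add: add_eq_0_iff)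
qed

lemma char2_diff: "CHAR('a::comm_ring_1) = 2 \<Longrightarrow> (x::'a) - y = x + y"
  using char2_neg[of y] by simp

lemma char2_3: "CHAR('a::comm_ring_1) = 2 \<Longrightarrow> (3::'a) = 1"
proof -
  assume "CHAR('a) = 2"
  hence "(2::'a) = 0" by (rule char2_two)
  have "(3::'a) = 2 + 1" by simp
  thus ?thesis using \<open>(2::'a) = 0\<close> by simp
qed

lemma char2_4: "CHAR('a::comm_ring_1) = 2 \<Longrightarrow> (4::'a) = 0"
proof -
  assume "CHAR('a) = 2"
  hence "(2::'a) = 0" by (rule char2_two)
  have "(4::'a) = 2 * 2" by simp
  thus ?thesis using \<open>(2::'a) = 0\<close> by simp
qed

lemma char2_even: "CHAR('a::comm_ring_1) = 2 \<Longrightarrow> (numeral (num.Bit0 n)::'a) = 0"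
proof -
  assume "CHAR('a) = 2"
  hence "(2::'a) = 0" by (rule char2_two)
  have "(numeral (num.Bit0 n)::'a) = 2 * numeral n" by (metis mult_2 numeral_Bit0)
  thus ?thesis using \<open>(2::'a) = 0\<close> by simp
qed

lemma char2_odd: "CHAR('a::comm_ring_1) = 2 \<Longrightarrow> (numeral (num.Bit1 n)::'a) = 1"
proof -
  assume c: "CHAR('a) = 2"
  have "(numeral (num.Bit1 n)::'a) = numeral (num.Bit0 n) + 1" by (simp only: numeral_Bit1 numeral_Bit0)
  thus ?thesis using char2_even[OF c] by simp
qed

definition sq3 :: "'a::comm_ring_1 \<times> 'a \<times> 'a \<Rightarrow> 'a \<times> 'a \<times> 'a" where
  "sq3 v = (case v of (x,y,z) \<Rightarrow> (x^2,y^2,z^2))"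

definition cross :: "'a::comm_ring_1 \<times> 'a \<times> 'a \<Rightarrow> 'a \<times> 'a \<times> 'a \<Rightarrow> 'a \<times> 'a \<times> 'a" where
  "cross v w = (case v of (x,y,z) \<Rightarrow> case w of (u,p,q) \<Rightarrow> (y*q - z*p, z*u - x*q, x*p - y*u))"

type_synonym 'a mat3 = "('a \<times> 'a \<times> 'a) \<times> ('a \<times> 'a \<times> 'a) \<times> ('a \<times> 'a \<times> 'a)"

definition mv :: "'a::comm_ring_1 mat3 \<Rightarrow> 'a \<times> 'a \<times> 'a \<Rightarrow> 'a \<times> 'a \<times> 'a" where
  "mv M v = (case M of ((a,b,c),(d,e,f),(g,h,i)) \<Rightarrow> case v of (x,y,z) \<Rightarrow>
      (a*x+b*y+c*z, d*x+e*y+f*z, g*x+h*y+i*z))"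

definition Mof :: "'a coeffs \<Rightarrow> 'a mat3" where
  "Mof B = ((B(2,1,1), B(0,3,1), B(0,1,3)), (B(3,0,1), B(1,2,1), B(1,0,3)), (B(3,1,0), B(1,3,0), B(1,1,2)))"

lemma sucs: "Suc 0 = 1" "Suc 1 = 2" "Suc 2 = 3" "Suc 3 = 4" by simp_all

lemmas c2simps = char2_two char2_3 char2_4 char2_diff char2_even

lemma grad:
  fixes B :: "'a::comm_ring_1 coeffs"
  assumes c: "CHAR('a) = 2" and "i < 3"
  shows "eval_form 3 (pderiv3 i B) (x,y,z) = coord i (cross (x,y,z) (mv (Mof B) (sq3 (x,y,z))))"
proof -
  have "i = 0 \<or> i = 1 \<or> i = 2" using assms(2) by arith
  thus ?thesis
    apply (elim disjE)
    apply (simp_all add: eval_form_def mon3 pderiv3_def)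
    apply (simp_all only: sucs c2simps[OF c] mult_zero_left mult_1_left add_0 add_0_right)
    apply (simp_all add: coord_def cross_def mv_def Mof_def sq3_def c2simps[OF c])
    apply (simp_all add: algebra_simps power2_eq_square power3_eq_cube)
    done
qed

lemma lt3: "{..<3::nat} = {0,1,2}" by auto

lemma hess:
  fixes B :: "'a::comm_ring_1 coeffs"
  assumes c: "CHAR('a) = 2" and "i < 3"
  shows "(\<Sum>j<3. eval_form 2 (pderiv3 j (pderiv3 i B)) (x,y,z) * coord j w) = coord i (cross w (mv (Mof B) (sq3 (x,y,z))))"
proof -
  obtain w1 w2 w3 where w: "w = (w1,w2,w3)" by (cases w) auto
  have "i = 0 \<or> i = 1 \<or> i = 2" using assms(2) by arith
  thus ?thesis unfolding w
    apply (elim disjE)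
    apply (simp_all add: lt3 coord_def)
    apply (simp_all add: eval_form_def mon2 pderiv3_def)
    apply (simp_all only: sucs c2simps[OF c] mult_zero_left mult_1_left add_0 add_0_right)
    apply (simp_all add: coord_def cross_def mv_def Mof_def sq3_def c2simps[OF c])
    apply (simp_all add: algebra_simps power2_eq_square power3_eq_cube)
    done
qed

lemmas c2s = c2simps char2_odd

lemma stepb:
  fixes x y z n11 n12 e n21 n22 n23 n31 n32 n33 :: "'a::comm_ring_1"
  assumes c: "CHAR('a) = 2"
  defines "h1 \<equiv> x^2 + n11*x + n12*y + e*z"
  and "h2 \<equiv> y^2 + n21*x + n22*y + n23*z"
  and "h3 \<equiv> z^2 + n31*x + n32*y + n33*z"
  and "p2 \<equiv> e*y^2 + n23*x^2 + (e*n21 + n23*n11)*x + (e*n22 + n23*n12)*y"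
  and "p3 \<equiv> (n12^2*(e*n22 + n23*n12) + e^3*n32 + e^2*n33*n12) * y + e*x^4 + (e*n11^2 + n12^2*n23 + e^2*n33)*x^2 + (n12^2*(e*n21 + n23*n11) + e^3*n31 + e^2*n33*n11)*x"
  shows "p2 = e*h2 + n23*h1" "p3 = e*(e^2*h3 + e*n33*h1 + h1^2) + n12^2*p2"
  unfolding h1_def h2_def h3_def p2_def p3_def
  by (simp_all add: algebra_simps power2_eq_square power3_eq_cube power4_eq_xxxx c2s[OF c])

definition add3 :: "'a::comm_ring_1 \<times> 'a \<times> 'a \<Rightarrow> 'a \<times> 'a \<times> 'a \<Rightarrow> 'a \<times> 'a \<times> 'a" where
  "add3 v w = (case v of (x,y,z) \<Rightarrow> case w of (u,p,q) \<Rightarrow> (x+u, y+p, z+q))"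

definition dot3 :: "'a::comm_ring_1 \<times> 'a \<times> 'a \<Rightarrow> 'a \<times> 'a \<times> 'a \<Rightarrow> 'a" where
  "dot3 v w = (case v of (x,y,z) \<Rightarrow> case w of (u,p,q) \<Rightarrow> x*u + y*p + z*q)"

definition det3 :: "'a::comm_ring_1 \<times> 'a \<times> 'a \<Rightarrow> 'a \<times> 'a \<times> 'a \<Rightarrow> 'a \<times> 'a \<times> 'a \<Rightarrow> 'a" where
  "det3 a b c = dot3 a (cross b c)"

definition detM :: "'a::comm_ring_1 mat3 \<Rightarrow> 'a" where
  "detM M = (case M of (r1,r2,r3) \<Rightarrow> det3 r1 r2 r3)"

definition adjM :: "'a::comm_ring_1 mat3 \<Rightarrow> 'a mat3" where
  "adjM M = (case M of ((a,b,c),(d,e,f),(g,h,i)) \<Rightarrow>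
     ((e*i-f*h, c*h-b*i, b*f-c*e),(f*g-d*i, a*i-c*g, c*d-a*f),(d*h-e*g, b*g-a*h, a*e-b*d)))"

definition phi :: "'a::comm_ring_1 mat3 \<Rightarrow> 'a \<times> 'a \<times> 'a \<Rightarrow> 'a \<times> 'a \<times> 'a" where
  "phi M v = mv M (sq3 v)"

lemmas vdefs = add3_def dot3_def det3_def cross_def mv_def sq3_def smult3_def phi_def detM_def adjM_def

lemma tri_all: "(\<And>x y z. P (x,y,z)) \<Longrightarrow> P v" by (cases v rule: prod_cases3) auto
lemma mat_all: "(\<And>a b c d e f g h i. P ((a,b,c),(d,e,f),(g,h,i))) \<Longrightarrow> P (M::'a mat3)"
  by (cases M rule: prod_cases3) (metis prod_cases3)

lemma triple_eq0: "((x,y,z) = (0,0,0)) \<longleftrightarrow> x = 0 \<and> y = 0 \<and> z = 0" by simp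

lemma adj_left: "mv (adjM M) (mv M v) = smult3 (detM M) (v::'a::comm_ring_1 \<times> 'a \<times> 'a)"
  apply (rule mat_all[of _ M])
  apply (rule tri_all[of _ v])
  by (simp add: vdefs algebra_simps)

lemma adj_right: "mv M (mv (adjM M) v) = smult3 (detM M) (v::'a::comm_ring_1 \<times> 'a \<times> 'a)"
  apply (rule mat_all[of _ M])
  apply (rule tri_all[of _ v])
  by (simp add: vdefs algebra_simps)

lemma det3_mv: "det3 (mv M a) (mv M b) (mv M c) = detM M * det3 a b (c::'a::comm_ring_1 \<times> 'a \<times> 'a)"
  apply (rule mat_all[of _ M])
  apply (rule tri_all[of _ a])
  apply (rule tri_all[of _ b])
  apply (rule tri_all[of _ c])
  by (simp add: vdefs algebra_simps)

lemma cramer: "smult3 (det3 a b c) d = add3 (smult3 (det3 d b c) a) (add3 (smult3 (det3 a d c) b) (smult3 (det3 a b d) (c::'a::comm_ring_1 \<times> 'a \<times> 'a)))"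
  apply (rule tri_all[of _ a])
  apply (rule tri_all[of _ b])
  apply (rule tri_all[of _ c])
  apply (rule tri_all[of _ d])
  by (simp add: vdefs algebra_simps)

lemma det3_lin1: "det3 (add3 (smult3 p a) (add3 (smult3 q b) (smult3 r c))) b c = p * det3 a b (c::'a::comm_ring_1 \<times> 'a \<times> 'a)"
  apply (rule tri_all[of _ a])
  apply (rule tri_all[of _ b])
  apply (rule tri_all[of _ c])
  by (simp add: vdefs algebra_simps)
lemma det3_lin2: "det3 a (add3 (smult3 p a) (add3 (smult3 q b) (smult3 r c))) c = q * det3 a b (c::'a::comm_ring_1 \<times> 'a \<times> 'a)"
  apply (rule tri_all[of _ a])
  apply (rule tri_all[of _ b])
  apply (rule tri_all[of _ c])
  by (simp add: vdefs algebra_simps)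
lemma det3_lin3: "det3 a b (add3 (smult3 p a) (add3 (smult3 q b) (smult3 r c))) = r * det3 a b (c::'a::comm_ring_1 \<times> 'a \<times> 'a)"
  apply (rule tri_all[of _ a])
  apply (rule tri_all[of _ b])
  apply (rule tri_all[of _ c])
  by (simp add: vdefs algebra_simps)

lemma phi_add:
  fixes u w :: "'a::comm_ring_1 \<times> 'a \<times> 'a"
  assumes c: "CHAR('a) = 2"
  shows "phi M (add3 u w) = add3 (phi M u) (phi M w)"
  apply (rule mat_all[of _ M])
  apply (rule tri_all[of _ u])
  apply (rule tri_all[of _ w])
  by (simp add: vdefs algebra_simps power2_eq_square c2s[OF c])

lemma phi_smult:
  fixes u :: "'a::comm_ring_1 \<times> 'a \<times> 'a"
  shows "phi M (smult3 t u) = smult3 (t^2) (phi M u)"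
  apply (rule mat_all[of _ M])
  apply (rule tri_all[of _ u])
  by (simp add: vdefs algebra_simps power2_eq_square)

lemma cross_par:
  fixes v w :: "'a::field \<times> 'a \<times> 'a"
  assumes "v \<noteq> (0,0,0)" "cross v w = (0,0,0)"
  shows "\<exists>c. w = smult3 c v"
proof -
  obtain x y z where v: "v = (x,y,z)" by (cases v rule: prod_cases3)
  obtain u p q where w: "w = (u,p,q)" by (cases w rule: prod_cases3)
  have e: "y*q = z*p" "z*u = x*q" "x*p = y*u" using assms(2) unfolding v w cross_def by auto
  consider "x \<noteq> 0" | "y \<noteq> 0" | "z \<noteq> 0" using assms(1) v by auto
  thus ?thesis
  proof cases
    case 1
    have "w = smult3 (u/x) v" unfolding v w smult3_def using 1 e
      by (auto simp: field_simps)
    thus ?thesis by blast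
  next
    case 2
    have "w = smult3 (p/y) v" unfolding v w smult3_def using 2 e
      by (auto simp: field_simps)
    thus ?thesis by blast
  next
    case 3
    have "w = smult3 (q/z) v" unfolding v w smult3_def using 3 e
      by (auto simp: field_simps)
    thus ?thesis by blast
  qed
qed

definition Sfix :: "'a::comm_ring_1 mat3 \<Rightarrow> ('a \<times> 'a \<times> 'a) set" where
  "Sfix M = {u. phi M u = u}"
definition cone :: "'a::comm_ring_1 mat3 \<Rightarrow> ('a \<times> 'a \<times> 'a) set" where
  "cone M = {v. v \<noteq> (0,0,0) \<and> cross v (phi M v) = (0,0,0)}"
definition Kc :: "'a::comm_ring_1 mat3 \<Rightarrow> ('a \<times> 'a \<times> 'a) set" where
  "Kc M = {v. v \<noteq> (0,0,0) \<and> phi M v = (0,0,0)}"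

lemma smult3_smult3: "smult3 a (smult3 b v) = smult3 (a*b) (v::'a::comm_ring_1 \<times> 'a \<times> 'a)"
  by (rule tri_all[of _ v]) (simp add: vdefs algebra_simps)
lemma smult3_add3: "smult3 a (add3 u v) = add3 (smult3 a u) (smult3 a (v::'a::comm_ring_1 \<times> 'a \<times> 'a))"
  by (rule tri_all[of _ v], rule tri_all[of _ u]) (simp add: vdefs algebra_simps)
lemma smult3_1[simp]: "smult3 1 v = (v::'a::comm_ring_1 \<times> 'a \<times> 'a)"
  by (rule tri_all[of _ v]) (simp add: vdefs)
lemma smult3_0[simp]: "smult3 0 (v::'a::comm_ring_1 \<times> 'a \<times> 'a) = (0,0,0)"
  by (rule tri_all[of _ v]) (simp add: vdefs)
lemma add3_0[simp]: "add3 (0,0,0) v = v" "add3 v (0,0,0) = (v::'a::comm_ring_1 \<times> 'a \<times> 'a)"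
  by (rule tri_all[of _ v], simp add: vdefs)+
lemma phi_0[simp]: "phi M (0,0,0) = (0,0,0)"
  by (rule mat_all[of _ M]) (simp add: vdefs)
lemma smult3_cancel:
  fixes w :: "'a::field \<times> 'a \<times> 'a"
  assumes "smult3 p w = smult3 q w" "w \<noteq> (0,0,0)" shows "p = q"
  using assms by (induct w rule: tri_all) (auto simp: vdefs)
lemma smult3_eq0:
  fixes w :: "'a::field \<times> 'a \<times> 'a"
  assumes "smult3 p w = (0,0,0)" "p \<noteq> 0" shows "w = (0,0,0)"
  using assms by (induct w rule: tri_all) (auto simp: vdefs)

lemma idem_01: "(c::'a::field) = c^2 \<Longrightarrow> c = 0 \<or> c = 1"
  by (metis power2_eq_square mult_cancel_right1 mult_zero_left)

lemma proj_smult: "(c::'a::field) \<noteq> 0 \<Longrightarrow> proj_point (smult3 c v) = proj_point v"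
proof -
  assume c: "c \<noteq> 0"
  have "\<exists>t. w = smult3 t (smult3 c v) \<and> t \<noteq> 0" if "w = smult3 s v" "s \<noteq> 0" for w s
    using that c by (intro exI[of _ "s/c"]) (simp add: smult3_smult3)
  moreover have "\<exists>t. w = smult3 t v \<and> t \<noteq> 0" if "w = smult3 s (smult3 c v)" "s \<noteq> 0" for w s
    using that c by (intro exI[of _ "s*c"]) (simp add: smult3_smult3)
  ultimately show ?thesis unfolding proj_point_def by blast
qed

lemma proj_self: "v \<in> proj_point (v::'a::field \<times> 'a \<times> 'a)"
  unfolding proj_point_def by (intro CollectI exI[of _ 1]) simp

lemma proj_eq:
  assumes "proj_point v = proj_point (w::'a::field \<times> 'a \<times> 'a)"
  shows "\<exists>c. c \<noteq> 0 \<and> w = smult3 c v"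
  using proj_self[of w] assms unfolding proj_point_def by auto

lemma cone_sub:
  fixes M :: "'a::field mat3"
  shows "proj_point ` cone M \<subseteq> proj_point ` (Sfix M - {(0,0,0)}) \<union> proj_point ` Kc M"
proof
  fix P assume "P \<in> proj_point ` cone M"
  then obtain v where v: "v \<in> cone M" "P = proj_point v" by auto
  hence vnz: "v \<noteq> (0,0,0)" and cr: "cross v (phi M v) = (0,0,0)" by (auto simp: cone_def)
  obtain c where c: "phi M v = smult3 c v" using cross_par[OF vnz cr] by blast
  show "P \<in> proj_point ` (Sfix M - {(0,0,0)}) \<union> proj_point ` Kc M"
  proof (cases "c = 0")
    case True
    hence "v \<in> Kc M" using c vnz by (simp add: Kc_def)
    thus ?thesis using v by auto
  next
    case False
    let ?u = "smult3 (1/c) v"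
    have "phi M ?u = ?u" using False by (simp add: phi_smult c smult3_smult3 power2_eq_square)
    moreover have "?u \<noteq> (0,0,0)" using False vnz smult3_eq0[of "1/c" v] by auto
    moreover have "proj_point ?u = P" using False v by (simp add: proj_smult)
    ultimately show ?thesis by (auto simp: Sfix_def)
  qed
qed

definition comb3 where
  "comb3 s1 s2 s3 p q r = add3 (smult3 p s1) (add3 (smult3 q s2) (smult3 r s3))"

lemma phi_comb3:
  fixes s1 s2 s3 :: "'a::comm_ring_1 \<times> 'a \<times> 'a"
  assumes c: "CHAR('a) = 2" and "s1 \<in> Sfix M" "s2 \<in> Sfix M" "s3 \<in> Sfix M"
  shows "phi M (comb3 s1 s2 s3 p q r) = comb3 s1 s2 s3 (p^2) (q^2) (r^2)"
  using assms unfolding comb3_def Sfix_def by (simp add: phi_add[OF c] phi_smult)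

lemma S3:
  fixes s1 s2 s3 :: "'a::field \<times> 'a \<times> 'a"
  assumes c: "CHAR('a) = 2" and S: "s1 \<in> Sfix M" "s2 \<in> Sfix M" "s3 \<in> Sfix M"
    and d: "det3 s1 s2 s3 \<noteq> 0" and s: "s \<in> Sfix M"
  shows "s \<in> (\<lambda>(p,q,r). comb3 s1 s2 s3 p q r) ` ({0,1} \<times> {0,1} \<times> {0,1})"
proof -
  define d where "d = det3 s1 s2 s3"
  define c1 where "c1 = det3 s s2 s3 / d"
  define c2 where "c2 = det3 s1 s s3 / d"
  define c3 where "c3 = det3 s1 s2 s / d"
  have "smult3 d s = add3 (smult3 (det3 s s2 s3) s1) (add3 (smult3 (det3 s1 s s3) s2) (smult3 (det3 s1 s2 s) s3))"
    unfolding d_def by (rule cramer)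
  hence "smult3 (1/d) (smult3 d s) = comb3 s1 s2 s3 c1 c2 c3"
    unfolding comb3_def c1_def c2_def c3_def by (simp add: smult3_add3 smult3_smult3)
  hence seq: "s = comb3 s1 s2 s3 c1 c2 c3" using assms(5) by (simp add: smult3_smult3 d_def)
  have seq2: "s = comb3 s1 s2 s3 (c1^2) (c2^2) (c3^2)"
    using phi_comb3[OF c S, of c1 c2 c3] seq s by (simp add: Sfix_def)
  have dd: "d \<noteq> 0" using assms(5) by (simp add: d_def)
  have "c1 * d = c1^2 * d"
    using det3_lin1[where p=c1 and a=s1 and q=c2 and b=s2 and r=c3 and c=s3] det3_lin1[where p="c1^2" and a=s1 and q="c2^2" and b=s2 and r="c3^2" and c=s3] seq seq2
    unfolding comb3_def d_def by metis
  hence e1: "c1 = c1^2" using dd by simp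
  have "c2 * d = c2^2 * d"
    using det3_lin2[where p=c1 and a=s1 and q=c2 and b=s2 and r=c3 and c=s3] det3_lin2[where p="c1^2" and a=s1 and q="c2^2" and b=s2 and r="c3^2" and c=s3] seq seq2
    unfolding comb3_def d_def by metis
  hence e2: "c2 = c2^2" using dd by simp
  have "c3 * d = c3^2 * d"
    using det3_lin3[where p=c1 and a=s1 and q=c2 and b=s2 and r=c3 and c=s3] det3_lin3[where p="c1^2" and a=s1 and q="c2^2" and b=s2 and r="c3^2" and c=s3] seq seq2
    unfolding comb3_def d_def by metis
  hence e3: "c3 = c3^2" using dd by simp
  have "(c1,c2,c3) \<in> {0,1} \<times> {0,1} \<times> {0,1}" using idem_01[OF e1] idem_01[OF e2] idem_01[OF e3] by auto
  thus ?thesis using seq by force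
qed

lemma det3_basis:
  fixes s1 s2 :: "'a::comm_ring_1 \<times> 'a \<times> 'a"
  assumes "cross s1 s2 \<noteq> (0,0,0)"
  shows "\<exists>t. det3 s1 s2 t \<noteq> 0"
proof -
  obtain a b c where w: "cross s1 s2 = (a,b,c)" by (cases "cross s1 s2" rule: prod_cases3)
  have "det3 s1 s2 (1,0,0) = a" "det3 s1 s2 (0,1,0) = b" "det3 s1 s2 (0,0,1) = c"
    using w by (induct s1 rule: tri_all, induct s2 rule: tri_all, simp add: vdefs algebra_simps)+
  thus ?thesis using assms w by (metis)
qed

lemma S2:
  fixes s1 s2 :: "'a::field \<times> 'a \<times> 'a"
  assumes c: "CHAR('a) = 2" and S: "s1 \<in> Sfix M" "s2 \<in> Sfix M"
    and w: "cross s1 s2 \<noteq> (0,0,0)" and s: "s \<in> Sfix M" and d0: "det3 s1 s2 s = 0"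
  shows "s \<in> {(0,0,0), s1, s2, add3 s1 s2}"
proof -
  obtain t where t: "det3 s1 s2 t \<noteq> 0" using det3_basis[OF w] by blast
  define d where "d = det3 s1 s2 t"
  define c1 where "c1 = det3 s s2 t / d"
  define c2 where "c2 = det3 s1 s t / d"
  have "smult3 d s = add3 (smult3 (det3 s s2 t) s1) (add3 (smult3 (det3 s1 s t) s2) (smult3 (det3 s1 s2 s) t))"
    unfolding d_def by (rule cramer)
  hence "smult3 (1/d) (smult3 d s) = add3 (smult3 c1 s1) (smult3 c2 s2)"
    unfolding c1_def c2_def using d0 by (simp add: smult3_add3 smult3_smult3)
  hence seq: "s = add3 (smult3 c1 s1) (smult3 c2 s2)" using t by (simp add: smult3_smult3 d_def)
  have seq2: "s = add3 (smult3 (c1^2) s1) (smult3 (c2^2) s2)"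
    using seq s S by (simp add: Sfix_def phi_add[OF c] phi_smult)
  have cr1: "cross (add3 (smult3 p s1) (smult3 q s2)) s2 = smult3 p (cross s1 s2)" for p q
    by (induct s1 rule: tri_all, induct s2 rule: tri_all) (simp add: vdefs algebra_simps)
  have cr2: "cross s1 (add3 (smult3 p s1) (smult3 q s2)) = smult3 q (cross s1 s2)" for p q
    by (induct s1 rule: tri_all, induct s2 rule: tri_all) (simp add: vdefs algebra_simps)
  have "smult3 c1 (cross s1 s2) = smult3 (c1^2) (cross s1 s2)" using cr1 seq seq2 by metis
  hence e1: "c1 = c1^2" using smult3_cancel w by blast
  have "smult3 c2 (cross s1 s2) = smult3 (c2^2) (cross s1 s2)" using cr2 seq seq2 by metis
  hence e2: "c2 = c2^2" using smult3_cancel w by blast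
  have "c1 = 0 \<or> c1 = 1" "c2 = 0 \<or> c2 = 1" using idem_01[OF e1] idem_01[OF e2] by auto
  thus ?thesis using seq by auto
qed

lemma S1:
  fixes s1 :: "'a::field \<times> 'a \<times> 'a"
  assumes S: "s1 \<in> Sfix M" and nz: "s1 \<noteq> (0,0,0)" and s: "s \<in> Sfix M" and cr: "cross s1 s = (0,0,0)"
  shows "s \<in> {(0,0,0), s1}"
proof -
  obtain c where seq: "s = smult3 c s1" using cross_par[OF nz cr] by blast
  have "s = smult3 (c^2) s1" using seq s S by (simp add: Sfix_def phi_smult)
  hence "c = c^2" using seq smult3_cancel nz by metis
  hence "c = 0 \<or> c = 1" by (rule idem_01)
  thus ?thesis using seq by auto
qed

lemma sq3_eq0:
  fixes v :: "'a::field \<times> 'a \<times> 'a"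
  shows "sq3 v = (0,0,0) \<Longrightarrow> v = (0,0,0)"
  by (induct v rule: tri_all) (simp add: vdefs)

lemma mv_0[simp]: "mv N (0,0,0) = (0,0,0)"
  by (rule mat_all[of _ N]) (simp add: vdefs)

lemma cross_0[simp]: "cross v (0,0,0) = (0,0,0)" "cross (0,0,0) v = (0,0,0)"
  by (induct v rule: tri_all, simp add: vdefs)+

lemma Kc_empty:
  fixes M :: "'a::field mat3"
  assumes "detM M \<noteq> 0" shows "Kc M = {}"
proof (rule ccontr)
  assume "Kc M \<noteq> {}"
  then obtain v where v: "v \<noteq> (0,0,0)" "mv M (sq3 v) = (0,0,0)" by (auto simp: Kc_def phi_def)
  have "smult3 (detM M) (sq3 v) = (0,0,0)" using adj_left[of M "sq3 v"] v by simp
  hence "sq3 v = (0,0,0)" using smult3_eq0 assms by blast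
  thus False using sq3_eq0 v by blast
qed

lemma card4: "card {a,b,c,d} \<le> 4"
proof -
  have "card (set [a,b,c,d]) \<le> length [a,b,c,d]" by (rule card_length)
  thus ?thesis by simp
qed

lemma smult3_z[simp]: "smult3 c (0,0,0) = (0,0,(0::'a::comm_ring_1))" by (simp add: smult3_def)

lemma Kinf:
  fixes M :: "'a::field mat3"
  assumes c: "CHAR('a) = 2" and inf: "infinite (UNIV::'a set)"
    and v1: "v1 \<in> Kc M" and v2: "v2 \<in> Kc M" and ne: "proj_point v1 \<noteq> proj_point v2"
  shows "infinite (proj_point ` cone M)"
proof
  assume fin: "finite (proj_point ` cone M)"
  have nz1: "v1 \<noteq> (0,0,0)" and nz2: "v2 \<noteq> (0,0,0)" and p1: "phi M v1 = (0,0,0)" and p2: "phi M v2 = (0,0,0)"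
    using v1 v2 by (auto simp: Kc_def)
  have w: "cross v1 v2 \<noteq> (0,0,0)"
  proof
    assume "cross v1 v2 = (0,0,0)"
    then obtain c where cv: "v2 = smult3 c v1" using cross_par[OF nz1] by blast
    have "c \<noteq> 0" using cv nz2 by auto
    thus False using ne cv proj_smult by metis
  qed
  define f where "f t = add3 v1 (smult3 t v2)" for t
  have cr1: "cross (f t) v2 = cross v1 v2" for t
    unfolding f_def by (induct v1 rule: tri_all, induct v2 rule: tri_all) (simp add: vdefs algebra_simps)
  have cr2: "cross v1 (f t) = smult3 t (cross v1 v2)" for t
    unfolding f_def by (induct v1 rule: tri_all, induct v2 rule: tri_all) (simp add: vdefs algebra_simps)
  have crs: "cross (smult3 a u) v = smult3 a (cross u v)" for a :: 'a and u v :: "'a \<times> 'a \<times> 'a"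
    by (induct u rule: tri_all, induct v rule: tri_all) (simp add: vdefs algebra_simps)
  have fnz: "f t \<noteq> (0,0,0)" for t using cr1[of t] w by auto
  have fcone: "f t \<in> cone M" for t
    using fnz[of t] p1 p2 unfolding cone_def f_def by (simp add: phi_add[OF c] phi_smult)
  have inj: "inj (\<lambda>t. proj_point (f t))"
  proof (rule injI)
    fix s t assume "proj_point (f s) = proj_point (f t)"
    then obtain a where a: "a \<noteq> 0" "f t = smult3 a (f s)" using proj_eq by blast
    have "cross v1 v2 = smult3 a (cross v1 v2)" using cr1[of t] cr1[of s] a crs by metis
    hence "a = 1" using smult3_cancel[of 1 "cross v1 v2" a] w by simp
    hence "f t = f s" using a by simp
    hence "smult3 t (cross v1 v2) = smult3 s (cross v1 v2)" using cr2 by metis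
    thus "s = t" using smult3_cancel w by metis
  qed
  have "range (\<lambda>t. proj_point (f t)) \<subseteq> proj_point ` cone M" using fcone by auto
  hence "finite (range (\<lambda>t. proj_point (f t)))" using fin finite_subset by blast
  hence "finite (UNIV::'a set)" using finite_imageD inj by blast
  thus False using inf by simp
qed


lemma part1_abs:
  fixes M :: "'a::field mat3"
  assumes c: "CHAR('a) = 2" and inf: "infinite (UNIV::'a set)" and fin: "finite (proj_point ` cone M)"
  shows "card (proj_point ` cone M) \<le> 7"
proof -
  let ?S = "Sfix M" let ?z = "(0::'a,0::'a,0::'a)"
  have zS: "?z \<in> ?S" by (simp add: Sfix_def)
  have sub: "proj_point ` cone M \<subseteq> proj_point ` (?S - {?z}) \<union> proj_point ` Kc M" by (rule cone_sub)
  show ?thesis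
  proof (cases "\<exists>s1\<in>?S. \<exists>s2\<in>?S. \<exists>s3\<in>?S. det3 s1 s2 s3 \<noteq> 0")
    case True
    then obtain s1 s2 s3 where S: "s1 \<in> ?S" "s2 \<in> ?S" "s3 \<in> ?S" and d: "det3 s1 s2 s3 \<noteq> 0" by blast
    let ?A = "({0,1} \<times> {0,1} \<times> {0,1}) :: ('a \<times> 'a \<times> 'a) set"
    have Ssub: "?S \<subseteq> (\<lambda>(p,q,r). comb3 s1 s2 s3 p q r) ` ?A" using S3[OF c S d] by blast
    have cA: "card ?A = 8" by (simp add: card_cartesian_product)
    have finS: "finite ?S" using Ssub finite_subset by blast
    have finA: "finite ?A" by simp
    have "card ?S \<le> card ((\<lambda>(p,q,r). comb3 s1 s2 s3 p q r) ` ?A)" by (rule card_mono[OF finite_imageI[OF finA] Ssub])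
    also have "\<dots> \<le> card ?A" by (rule card_image_le[OF finA])
    finally have cS: "card ?S \<le> 8" using cA by simp
    have "det3 s1 s2 s3 = detM M * det3 (sq3 s1) (sq3 s2) (sq3 s3)"
      using S det3_mv[of M "sq3 s1" "sq3 s2" "sq3 s3"] by (simp add: Sfix_def phi_def)
    hence "detM M \<noteq> 0" using d by auto
    hence K: "Kc M = {}" by (rule Kc_empty)
    have "card (proj_point ` cone M) \<le> card (proj_point ` (?S - {?z}))"
      using sub K finS by (intro card_mono) auto
    also have "\<dots> \<le> card (?S - {?z})" using finS by (intro card_image_le) auto
    also have "\<dots> = card ?S - 1" using zS finS by simp
    finally show ?thesis using cS by linarith
  next
    case False
    have Ssmall: "finite ?S \<and> card ?S \<le> 4"
    proof (cases "?S \<subseteq> {?z}")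
      case True thus ?thesis using card_mono[OF _ True] finite_subset[OF True] by auto
    next
      case False
      then obtain s1 where s1: "s1 \<in> ?S" "s1 \<noteq> ?z" by auto
      show ?thesis
      proof (cases "\<forall>s\<in>?S. cross s1 s = ?z")
        case True
        hence sub2: "?S \<subseteq> {?z, s1}" using S1[OF s1(1) s1(2)] by blast
        have "card {?z, s1} \<le> 4" using card4[of ?z s1 s1 s1] by simp
        moreover have "card ?S \<le> card {?z, s1}" by (rule card_mono[OF _ sub2]) simp
        ultimately show ?thesis using finite_subset[OF sub2] by auto
      next
        case False
        then obtain s2 where s2: "s2 \<in> ?S" "cross s1 s2 \<noteq> ?z" by auto
        have "\<forall>s\<in>?S. det3 s1 s2 s = 0" using \<open>\<not> (\<exists>s1\<in>?S. \<exists>s2\<in>?S. \<exists>s3\<in>?S. det3 s1 s2 s3 \<noteq> 0)\<close> s1 s2 by blast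
        hence sub4: "?S \<subseteq> {?z, s1, s2, add3 s1 s2}" using S2[OF c s1(1) s2(1) s2(2)] by blast
        have "card ?S \<le> card {?z, s1, s2, add3 s1 s2}" by (rule card_mono[OF _ sub4]) simp
        thus ?thesis using finite_subset[OF sub4] card4[of ?z s1 s2 "add3 s1 s2"] by auto
      qed
    qed
    have finK: "finite (proj_point ` Kc M)"
      using fin by (rule finite_subset[rotated]) (auto simp: cone_def Kc_def)
    have cK: "card (proj_point ` Kc M) \<le> 1"
    proof (rule ccontr)
      assume "\<not> card (proj_point ` Kc M) \<le> 1"
      then obtain P Q where "P \<in> proj_point ` Kc M" "Q \<in> proj_point ` Kc M" "P \<noteq> Q"
        using card_le_Suc0_iff_eq[OF finK] by auto
      then obtain v1 v2 where "v1 \<in> Kc M" "v2 \<in> Kc M" "P = proj_point v1" "Q = proj_point v2" by blast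
      hence "v1 \<in> Kc M" "v2 \<in> Kc M" "proj_point v1 \<noteq> proj_point v2" using \<open>P \<noteq> Q\<close> by auto
      thus False using Kinf[OF c inf] fin by blast
    qed
    have "card (proj_point ` cone M) \<le> card (proj_point ` (?S - {?z}) \<union> proj_point ` Kc M)"
      using sub Ssmall finK by (intro card_mono) auto
    also have "\<dots> \<le> card (proj_point ` (?S - {?z})) + card (proj_point ` Kc M)" by (rule card_Un_le)
    also have "card (proj_point ` (?S - {?z})) \<le> card (?S - {?z})" using Ssmall by (intro card_image_le) auto
    also have "card (?S - {?z}) = card ?S - 1" using zS Ssmall by simp
    finally show ?thesis using Ssmall cK by linarith
  qed
qed

lemma card_roots_sqfree:
  fixes p :: "'a::alg_closed_field poly"
  assumes "p \<noteq> 0" "\<forall>x. poly p x = 0 \<longrightarrow> poly (pderiv p) x \<noteq> 0"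
  shows "card {x. poly p x = 0} = degree p"
  using assms
proof (induction "degree p" arbitrary: p rule: less_induct)
  case (less p)
  show ?case
  proof (cases "degree p = 0")
    case True
    then obtain a where "p = [:a:]" by (metis degree_eq_zeroE)
    hence "{x. poly p x = 0} = {}" using less.prems by auto
    thus ?thesis using True by simp
  next
    case False
    then obtain r where r: "poly p r = 0" using alg_closed_imp_poly_has_root by blast
    hence "[:-r, 1:] dvd p" using poly_eq_0_iff_dvd by blast
    then obtain q where pq: "p = [:-r, 1:] * q" by (elim dvdE)
    have q0: "q \<noteq> 0" using less.prems pq by auto
    have deg: "degree p = Suc (degree q)" unfolding pq using q0 by (subst degree_mult_eq) auto
    have d1: "pderiv [:-r,1:] = 1" by (simp add: pderiv_pCons)
    have pd: "pderiv p = [:-r,1:] * pderiv q + q" unfolding pq by (simp only: pderiv_mult d1 mult_1_right)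
    have "poly (pderiv p) r \<noteq> 0" using less.prems(2) r by blast
    hence qr: "poly q r \<noteq> 0" unfolding pd by simp
    have "\<forall>x. poly q x = 0 \<longrightarrow> poly (pderiv q) x \<noteq> 0"
    proof (intro allI impI)
      fix x assume qx: "poly q x = 0"
      hence "poly p x = 0" unfolding pq by simp
      hence "poly (pderiv p) x \<noteq> 0" using less.prems(2) by blast
      thus "poly (pderiv q) x \<noteq> 0" unfolding pd using qx by auto
    qed
    hence IH: "card {x. poly q x = 0} = degree q" using less.hyps[of q] deg q0 by simp
    have roots: "{x. poly p x = 0} = insert r {x. poly q x = 0}" unfolding pq by auto
    have "finite {x. poly q x = 0}" using q0 by (rule poly_roots_finite)
    hence "card {x. poly p x = 0} = Suc (card {x. poly q x = 0})" unfolding roots using qr by simp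
    thus ?thesis using IH deg by simp
  qed
qed

lemma alg_closed_infinite: "infinite (UNIV :: 'a::alg_closed_field set)"
proof
  assume fin: "finite (UNIV :: 'a set)"
  define q :: "'a poly" where "q = (\<Prod>a\<in>UNIV. [:-a, 1:])"
  have dq: "degree q = card (UNIV :: 'a set)"
    unfolding q_def by (subst degree_prod_eq_sum_degree) (auto simp: fin)
  have "card (UNIV :: 'a set) > 0" using fin by (simp add: card_gt_0_iff)
  hence "degree (q + 1) > 0" using dq by (simp add: degree_add_eq_left)
  then obtain r where "poly (q + 1) r = 0" using alg_closed_imp_poly_has_root by blast
  moreover have "poly q r = 0" unfolding q_def poly_prod using fin by (intro prod_zero) auto
  ultimately show False by simp
qed

definition eN :: "'a::comm_ring_1 mat3 \<Rightarrow> 'a" where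
  "eN N = (case N of ((n11,n12,n13),(n21,n22,n23),(n31,n32,n33)) \<Rightarrow> n13)"
definition B2N :: "'a::comm_ring_1 mat3 \<Rightarrow> 'a" where
  "B2N N = (case N of ((n11,n12,n13),(n21,n22,n23),(n31,n32,n33)) \<Rightarrow> n13*n21 + n23*n11)"
definition GN :: "'a::comm_ring_1 mat3 \<Rightarrow> 'a" where
  "GN N = (case N of ((n11,n12,n13),(n21,n22,n23),(n31,n32,n33)) \<Rightarrow> n13*n22 + n23*n12)"
definition q2N :: "'a::comm_ring_1 mat3 \<Rightarrow> 'a" where
  "q2N N = (case N of ((n11,n12,n13),(n21,n22,n23),(n31,n32,n33)) \<Rightarrow> n13*n11^2 + n12^2*n23 + n13^2*n33)"
definition q1N :: "'a::comm_ring_1 mat3 \<Rightarrow> 'a" where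
  "q1N N = (case N of ((n11,n12,n13),(n21,n22,n23),(n31,n32,n33)) \<Rightarrow> n12^2*B2N N + n13^3*n31 + n13^2*n33*n11)"
definition DN :: "'a::comm_ring_1 mat3 \<Rightarrow> 'a" where
  "DN N = (case N of ((n11,n12,n13),(n21,n22,n23),(n31,n32,n33)) \<Rightarrow> n12^2*GN N + n13^3*n32 + n13^2*n33*n12)"
definition c1N :: "'a::comm_ring_1 mat3 \<Rightarrow> 'a" where
  "c1N N = GN N * q1N N + DN N * B2N N"

lemma elim_card:
  fixes N :: "'a::alg_closed_field mat3"
  assumes c: "CHAR('a) = 2" and e0: "eN N \<noteq> 0" and D0: "DN N \<noteq> 0" and c10: "c1N N \<noteq> 0"
  shows "card {w. sq3 w = mv N w} = 8"
proof -
  obtain n11 n12 n13 n21 n22 n23 n31 n32 n33 where N: "N = ((n11,n12,n13),(n21,n22,n23),(n31,n32,n33))"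
    by (cases N rule: prod_cases3) (metis prod_cases3)
  define e where "e = n13"
  define A2 where "A2 = n23"
  define B2 where "B2 = B2N N"
  define G where "G = GN N"
  define q2 where "q2 = q2N N"
  define q1 where "q1 = q1N N"
  define D where "D = DN N"
  define c1 where "c1 = c1N N"
  have B2e: "B2 = e*n21 + n23*n11" unfolding B2_def B2N_def N e_def by simp
  have Ge: "G = e*n22 + n23*n12" unfolding G_def GN_def N e_def by simp
  have q2e: "q2 = e*n11^2 + n12^2*A2 + e^2*n33" unfolding q2_def q2N_def N e_def A2_def by simp
  have q1e: "q1 = n12^2*B2 + e^3*n31 + e^2*n33*n11" unfolding q1_def q1N_def N e_def B2_def by simp
  have De: "D = n12^2*G + e^3*n32 + e^2*n33*n12" unfolding D_def DN_def N e_def G_def by simp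
  have c1e: "c1 = G*q1 + D*B2" unfolding c1_def c1N_def G_def q1_def D_def B2_def by simp
  have ee: "e \<noteq> 0" using e0 unfolding e_def eN_def N by simp
  have DD: "D \<noteq> 0" using D0 D_def by simp
  have cc: "c1 \<noteq> 0" using c10 c1_def by simp
  define Q where "Q x = e*x^4 + q2*x^2 + q1*x" for x
  define L where "L x = e*(Q x)^2 + G*D*(Q x) + D^2*A2*x^2 + D^2*B2*x" for x
  define R where "R x y = x^2 + n11*x + n12*y" for x y
  define h1 where "h1 x y z = x^2 + n11*x + n12*y + e*z" for x y z
  define h2 where "h2 x y z = y^2 + n21*x + n22*y + n23*z" for x y z
  define h3 where "h3 x y z = z^2 + n31*x + n32*y + n33*z" for x y z
  define p2 where "p2 x y = e*y^2 + A2*x^2 + B2*x + G*y" for x y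
  define p3 where "p3 x y = D*y + Q x" for x y
  have id2: "p2 x y = e * h2 x y z + n23 * h1 x y z" for x y z
    unfolding p2_def h1_def h2_def B2e Ge A2_def
    by (simp add: algebra_simps power2_eq_square c2s[OF c])
  have id3: "p3 x y = e*(e^2*h3 x y z + e*n33*h1 x y z + (h1 x y z)^2) + n12^2 * p2 x y" for x y z
    unfolding p3_def p2_def h1_def h3_def Q_def q2e q1e De
    by (simp add: algebra_simps power2_eq_square power3_eq_cube power4_eq_xxxx c2s[OF c])
  have idL: "L x = D^2 * p2 x y + (e * p3 x y + G*D) * p3 x y" for x y
    unfolding L_def p2_def p3_def
    by (simp add: algebra_simps power2_eq_square c2s[OF c])
  have eqs: "sq3 (x,y,z) = mv N (x,y,z) \<longleftrightarrow> h1 x y z = 0 \<and> h2 x y z = 0 \<and> h3 x y z = 0" for x y z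
    unfolding sq3_def mv_def N h1_def h2_def h3_def e_def
    by (simp add: eq_iff_diff_eq_0[of "x^2"] eq_iff_diff_eq_0[of "y^2"] eq_iff_diff_eq_0[of "z^2"] c2s[OF c] algebra_simps)
  define f where "f x = (x, Q x / D, R x (Q x / D) / e)" for x
  have fwd: "L x = 0 \<and> w = f x" if "sq3 w = mv N w" "w = (x,y,z)" for w x y z
  proof -
    have h: "h1 x y z = 0" "h2 x y z = 0" "h3 x y z = 0" using that eqs by auto
    have "p2 x y = 0" using id2[of x y z] h by simp
    moreover have "p3 x y = 0" using id3[of x y z] h \<open>p2 x y = 0\<close> by simp
    ultimately have "L x = 0" using idL[of x y] by simp
    have "D*y = - Q x" using \<open>p3 x y = 0\<close> unfolding p3_def by (simp add: add_eq_0_iff2)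
    hence "D*y = Q x" by (simp add: char2_neg[OF c])
    hence yy: "y = Q x / D" using DD by (simp add: field_simps)
    have "R x y + e*z = 0" using h(1) unfolding h1_def R_def by (simp add: algebra_simps)
    hence "e*z = - R x y" by (simp add: add_eq_0_iff)
    hence "e*z = R x y" by (simp add: char2_neg[OF c])
    hence "z = R x y / e" using ee by (simp add: field_simps)
    thus ?thesis using yy that(2) \<open>L x = 0\<close> unfolding f_def by simp
  qed
  have bwd: "sq3 (f x) = mv N (f x)" if "L x = 0" for x
  proof -
    define y where "y = Q x / D"
    define z where "z = R x y / e"
    have fx: "f x = (x,y,z)" unfolding f_def y_def z_def by simp
    have "D*y = Q x" unfolding y_def using DD by simp
    hence P3: "p3 x y = 0" unfolding p3_def using char2_neg[OF c, of "Q x"] by (simp add: add_eq_0_iff2)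
    have "e*z = R x y" unfolding z_def using ee by simp
    hence "R x y + e*z = 0" using char2_neg[OF c, of "R x y"] by (simp add: add_eq_0_iff)
    hence H1: "h1 x y z = 0" unfolding h1_def R_def by (simp add: algebra_simps)
    have "D^2 * p2 x y = 0" using idL[of x y] that P3 by simp
    hence P2: "p2 x y = 0" using DD by simp
    have "e * h2 x y z = 0" using id2[of x y z] P2 H1 by (simp add: c2s[OF c])
    hence H2: "h2 x y z = 0" using ee by simp
    have "e*(e^2*h3 x y z) = 0" using id3[of x y z] P2 P3 H1 by simp
    hence H3: "h3 x y z = 0" using ee by simp
    show ?thesis unfolding fx using eqs H1 H2 H3 by blast
  qed
  have Seq: "{w. sq3 w = mv N w} = f ` {x. L x = 0}"
  proof
    show "{w. sq3 w = mv N w} \<subseteq> f ` {x. L x = 0}"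
    proof
      fix w assume "w \<in> {w. sq3 w = mv N w}"
      moreover obtain x y z where "w = (x,y,z)" by (cases w rule: prod_cases3)
      ultimately show "w \<in> f ` {x. L x = 0}" using fwd by blast
    qed
    show "f ` {x. L x = 0} \<subseteq> {w. sq3 w = mv N w}" using bwd by auto
  qed
  have injf: "inj f" unfolding f_def by (rule injI) simp
  define l4 where "l4 = e*q2^2 + G*D*e"
  define l2 where "l2 = e*q1^2 + G*D*q2 + D^2*A2"
  define p where "p = [:0, D*c1, l2, 0, l4, 0, 0, 0, e^3:]"
  have polyp: "poly p x = L x" for x
    unfolding p_def L_def Q_def l4_def l2_def c1e
    by (simp add: algebra_simps power2_eq_square power3_eq_cube power4_eq_xxxx c2s[OF c])
  have dp: "pderiv p = [:D*c1:]"
    unfolding p_def by (simp add: pderiv_pCons c2s[OF c])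
  have degp: "degree p = 8" unfolding p_def using ee by (simp add: numeral_eq_Suc)
  have p0: "p \<noteq> 0" using degp by auto
  have "card {x. poly p x = 0} = 8"
    using card_roots_sqfree[OF p0] dp DD cc degp by simp
  hence "card {x. L x = 0} = 8" using polyp by simp
  thus ?thesis unfolding Seq using card_image[OF inj_on_subset[OF injf]] by simp
qed

lemma sq3_smult: "sq3 (smult3 t v) = smult3 (t^2) (sq3 (v::'a::comm_ring_1 \<times> 'a \<times> 'a))"
  by (induct v rule: tri_all) (simp add: vdefs power_mult_distrib)
lemma mv_smult: "mv N (smult3 t v) = smult3 t (mv N (v::'a::comm_ring_1 \<times> 'a \<times> 'a))"
  by (rule mat_all[of _ N], induct v rule: tri_all) (simp add: vdefs algebra_simps)
lemma cross_self[simp]: "cross v v = (0,0,(0::'a::comm_ring_1))"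
  by (induct v rule: tri_all) (simp add: vdefs algebra_simps)
lemma cross_smult2: "cross w (smult3 t v) = smult3 t (cross w (v::'a::comm_ring_1 \<times> 'a \<times> 'a))"
  by (induct v rule: tri_all, induct w rule: tri_all) (simp add: vdefs algebra_simps)
lemma cross_smult1: "cross (smult3 t v) v = (0,0,(0::'a::comm_ring_1))"
  by (induct v rule: tri_all) (simp add: vdefs algebra_simps)

lemma part2_abs:
  fixes M :: "'a::alg_closed_field mat3"
  assumes c: "CHAR('a) = 2" and d: "detM M \<noteq> 0" and e0: "eN (adjM M) \<noteq> 0"
    and D0: "DN (adjM M) \<noteq> 0" and c10: "c1N (adjM M) \<noteq> 0"
  shows "finite (proj_point ` cone M) \<and> card (proj_point ` cone M) = 7"
proof -
  let ?N = "adjM M" let ?d = "detM M" let ?z = "(0::'a,0::'a,0::'a)"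
  let ?S' = "{w. sq3 w = mv ?N w}" let ?S = "Sfix M"
  have c8: "card ?S' = 8" by (rule elim_card[OF c e0 D0 c10])
  have Seq: "?S = (\<lambda>w. smult3 (1/?d) w) ` ?S'"
  proof
    show "?S \<subseteq> (\<lambda>w. smult3 (1/?d) w) ` ?S'"
    proof
      fix u assume u: "u \<in> ?S"
      hence pu: "mv M (sq3 u) = u" by (simp add: Sfix_def phi_def)
      have "mv ?N u = smult3 ?d (sq3 u)" using adj_left[of M "sq3 u"] pu by simp
      hence "sq3 (smult3 ?d u) = mv ?N (smult3 ?d u)" by (simp add: sq3_smult mv_smult smult3_smult3 power2_eq_square)
      moreover have "u = smult3 (1/?d) (smult3 ?d u)" using d by (simp add: smult3_smult3)
      ultimately show "u \<in> (\<lambda>w. smult3 (1/?d) w) ` ?S'" by blast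
    qed
    show "(\<lambda>w. smult3 (1/?d) w) ` ?S' \<subseteq> ?S"
    proof
      fix u assume "u \<in> (\<lambda>w. smult3 (1/?d) w) ` ?S'"
      then obtain w where w: "sq3 w = mv ?N w" "u = smult3 (1/?d) w" by auto
      have pw: "phi M w = smult3 ?d w" using w by (simp add: phi_def adj_right)
      have "phi M u = smult3 ((1/?d)^2) (phi M w)" using w by (simp add: phi_smult)
      also have "\<dots> = u" using w d pw by (simp add: smult3_smult3 power2_eq_square)
      finally show "u \<in> ?S" by (simp add: Sfix_def)
    qed
  qed
  have inj1: "inj (\<lambda>w. smult3 (1/?d) (w::'a\<times>'a\<times>'a))"
  proof (rule injI)
    fix a b :: "'a\<times>'a\<times>'a" assume "smult3 (1/?d) a = smult3 (1/?d) b"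
    hence "smult3 ?d (smult3 (1/?d) a) = smult3 ?d (smult3 (1/?d) b)" by simp
    thus "a = b" using d by (simp add: smult3_smult3)
  qed
  have cS: "card ?S = 8" unfolding Seq using card_image[OF inj_on_subset[OF inj1]] c8 by simp
  have finS: "finite ?S" using cS by (intro card_ge_0_finite) simp
  have zS: "?z \<in> ?S" by (simp add: Sfix_def)
  have K: "Kc M = {}" by (rule Kc_empty[OF d])
  have coneeq: "proj_point ` cone M = proj_point ` (?S - {?z})"
  proof
    show "proj_point ` cone M \<subseteq> proj_point ` (?S - {?z})" using cone_sub[of M] K by simp
    have "?S - {?z} \<subseteq> cone M" by (auto simp: cone_def Sfix_def)
    thus "proj_point ` (?S - {?z}) \<subseteq> proj_point ` cone M" by (rule image_mono)
  qed
  have injp: "inj_on proj_point (?S - {?z})"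
  proof (rule inj_onI)
    fix u u' assume u: "u \<in> ?S - {?z}" and u': "u' \<in> ?S - {?z}" and eq: "proj_point u = proj_point u'"
    obtain a where a: "a \<noteq> 0" "u' = smult3 a u" using proj_eq[OF eq] by blast
    have "u' = smult3 (a^2) u" using u u' a by (simp add: Sfix_def phi_smult)
    hence "smult3 a u = smult3 (a^2) u" using a by simp
    hence "a = a^2" using u by (intro smult3_cancel) auto
    hence "a = 1" using a idem_01 by blast
    thus "u = u'" using a by simp
  qed
  have "card (proj_point ` cone M) = card (?S - {?z})" unfolding coneeq by (rule card_image[OF injp])
  also have "\<dots> = 7" using cS zS finS by simp
  finally show ?thesis using finS coneeq by simp
qed

lemma reduced_abs:
  fixes M :: "'a::field mat3"
  assumes d: "detM M \<noteq> 0" and v: "v \<in> cone M"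
  shows "{w. cross w (phi M v) = (0,0,0)} = {smult3 t v | t. True}"
proof -
  have vnz: "v \<noteq> (0,0,0)" and cr: "cross v (phi M v) = (0,0,0)" using v by (auto simp: cone_def)
  obtain l where l: "phi M v = smult3 l v" using cross_par[OF vnz cr] by blast
  have l0: "l \<noteq> 0"
  proof
    assume "l = 0"
    hence "v \<in> Kc M" using l vnz by (simp add: Kc_def)
    thus False using Kc_empty[OF d] by simp
  qed
  show ?thesis
  proof
    show "{w. cross w (phi M v) = (0,0,0)} \<subseteq> {smult3 t v | t. True}"
    proof
      fix w assume "w \<in> {w. cross w (phi M v) = (0,0,0)}"
      hence "smult3 l (cross w v) = (0,0,0)" using l by (simp add: cross_smult2)
      hence "cross w v = (0,0,0)" using smult3_eq0 l0 by blast
      hence "cross v w = (0,0,0)" by (induct v rule: tri_all, induct w rule: tri_all) (simp add: vdefs algebra_simps)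
      then obtain t where "w = smult3 t v" using cross_par[OF vnz] by blast
      thus "w \<in> {smult3 t v | t. True}" by blast
    qed
    show "{smult3 t v | t. True} \<subseteq> {w. cross w (phi M v) = (0,0,0)}"
    proof
      fix w assume "w \<in> {smult3 t v | t. True}"
      then obtain t where "w = smult3 t v" by blast
      hence "cross w (phi M v) = smult3 l (cross (smult3 t v) v)" using l by (simp add: cross_smult2)
      also have "\<dots> = (0,0,0)" by (simp add: cross_smult1)
      finally show "w \<in> {w. cross w (phi M v) = (0,0,0)}" by simp
    qed
  qed
qed

lemma qpf_diff: "P \<in> quartic_poly_funs \<Longrightarrow> R \<in> quartic_poly_funs \<Longrightarrow> (\<lambda>B. P B - R B) \<in> quartic_poly_funs"
proof -
  assume a: "P \<in> quartic_poly_funs" "R \<in> quartic_poly_funs"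
  have "(\<lambda>B. P B + (-1) * R B) \<in> quartic_poly_funs"
    by (intro quartic_poly_funs.add quartic_poly_funs.mult quartic_poly_funs.const a)
  thus ?thesis by simp
qed

lemma qpf_pow: "P \<in> quartic_poly_funs \<Longrightarrow> (\<lambda>B. P B ^ n) \<in> quartic_poly_funs"
proof (induction n)
  case 0 thus ?case using quartic_poly_funs.const[of 1] by simp
next
  case (Suc n) thus ?case using quartic_poly_funs.mult[OF Suc.prems Suc.IH] by simp
qed

definition PB :: "'a::comm_ring_1 coeffs \<Rightarrow> 'a" where
  "PB = (\<lambda>B. detM (Mof B) * eN (adjM (Mof B)) * DN (adjM (Mof B)) * c1N (adjM (Mof B)))"

lemma PB_qpf: "PB \<in> quartic_poly_funs"
  unfolding PB_def Mof_def detM_def adjM_def eN_def DN_def c1N_def GN_def q1N_def B2N_def det3_def dot3_def cross_def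
  apply (simp only: prod.case)
  apply (intro quartic_poly_funs.mult quartic_poly_funs.add qpf_diff qpf_pow quartic_poly_funs.var)
  apply (simp_all add: monomials_def)
  done

definition B0 :: "'a::comm_ring_1 coeffs" where
  "B0 m = (if m = (3,1,0) \<or> m = (0,3,1) \<or> m = (1,0,3) then 1 else 0)"

lemma B0_homog: "homog_form 4 B0"
  unfolding homog_form_def B0_def monomials_def by auto

lemma B0_PB:
  assumes c: "CHAR('a::comm_ring_1) = 2"
  shows "PB (B0 :: 'a coeffs) \<noteq> 0"
  unfolding PB_def Mof_def B0_def detM_def adjM_def eN_def DN_def c1N_def GN_def q1N_def B2N_def det3_def dot3_def cross_def
  using c by (simp add: c2s[OF c])

lemma all3: "(\<forall>i<3::nat. P i) \<longleftrightarrow> P 0 \<and> P 1 \<and> P 2"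
proof -
  have "i < 3 \<longleftrightarrow> i = 0 \<or> i = 1 \<or> i = 2" for i :: nat by arith
  thus ?thesis by auto
qed

lemma coord_all: "(\<forall>i<3. coord i t = (0::'a::zero)) \<longleftrightarrow> t = (0,0,0)"
  by (induct t rule: tri_all) (simp add: all3 coord_def)

lemma crit_cone_eq:
  fixes B :: "'a::field coeffs"
  assumes c: "CHAR('a) = 2"
  shows "crit_cone B = cone (Mof B)"
proof -
  have "(\<forall>i<3. eval_form 3 (pderiv3 i B) v = 0) \<longleftrightarrow> cross v (phi (Mof B) v) = (0,0,0)" for v
  proof (induct v rule: tri_all)
    case (1 x y z)
    have "(\<forall>i<3. eval_form 3 (pderiv3 i B) (x,y,z) = 0) \<longleftrightarrow> (\<forall>i<3. coord i (cross (x,y,z) (phi (Mof B) (x,y,z))) = 0)"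
      using grad[OF c] by (simp add: phi_def)
    thus ?case by (simp add: coord_all)
  qed
  thus ?thesis unfolding crit_cone_def cone_def by simp
qed

lemma reduced_eq:
  fixes B :: "'a::field coeffs"
  assumes c: "CHAR('a) = 2"
  shows "reduced_crit_point B v \<longleftrightarrow> {w. cross w (phi (Mof B) v) = (0,0,0)} = {smult3 t v | t. True}"
proof -
  have "(\<forall>i<3. (\<Sum>j<3. eval_form 2 (pderiv3 j (pderiv3 i B)) v * coord j w) = 0) \<longleftrightarrow> cross w (phi (Mof B) v) = (0,0,0)" for w
  proof (induct v rule: tri_all)
    case (1 x y z)
    have "(\<forall>i<3. (\<Sum>j<3. eval_form 2 (pderiv3 j (pderiv3 i B)) (x,y,z) * coord j w) = 0) \<longleftrightarrow> (\<forall>i<3. coord i (cross w (phi (Mof B) (x,y,z))) = 0)"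
      using hess[OF c] by (simp add: phi_def)
    thus ?case by (simp add: coord_all)
  qed
  thus ?thesis unfolding reduced_crit_point_def by simp
qed

theorem proposition2p3:
  assumes "CHAR('a::alg_closed_field) = 2"
  shows "(\<forall>B :: 'a coeffs. homog_form 4 B \<longrightarrow> finite (crit_locus B) \<longrightarrow>
            card (crit_locus B) \<le> 7)
       \<and> (\<exists>P \<in> (quartic_poly_funs :: ('a coeffs \<Rightarrow> 'a) set).
            (\<exists>B. homog_form 4 B \<and> P B \<noteq> 0) \<and>
            (\<forall>B. homog_form 4 B \<and> P B \<noteq> 0 \<longrightarrow>
               finite (crit_locus B) \<and> card (crit_locus B) = 7 \<and>
               (\<forall>v\<in>crit_cone B. reduced_crit_point B v)))"
proof -
  note c = assms
  have cl: "crit_locus B = proj_point ` cone (Mof B)" for B :: "'a coeffs"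
    unfolding crit_locus_def crit_cone_eq[OF c] ..
  have part1: "\<forall>B :: 'a coeffs. homog_form 4 B \<longrightarrow> finite (crit_locus B) \<longrightarrow> card (crit_locus B) \<le> 7"
    unfolding cl using part1_abs[OF c alg_closed_infinite] by blast
  have part2: "finite (crit_locus B) \<and> card (crit_locus B) = 7 \<and> (\<forall>v\<in>crit_cone B. reduced_crit_point B v)"
    if "PB B \<noteq> 0" for B :: "'a coeffs"
  proof -
    have nz: "detM (Mof B) \<noteq> 0" "eN (adjM (Mof B)) \<noteq> 0" "DN (adjM (Mof B)) \<noteq> 0" "c1N (adjM (Mof B)) \<noteq> 0"
      using that unfolding PB_def by auto
    have "finite (crit_locus B) \<and> card (crit_locus B) = 7"
      unfolding cl using part2_abs[OF c nz] .
    moreover have "\<forall>v\<in>crit_cone B. reduced_crit_point B v"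
      unfolding crit_cone_eq[OF c] reduced_eq[OF c] using reduced_abs[OF nz(1)] by blast
    ultimately show ?thesis by blast
  qed
  show ?thesis
  proof (intro conjI part1 bexI[of _ PB] PB_qpf)
    show "\<exists>B. homog_form 4 B \<and> PB B \<noteq> (0::'a)" using B0_homog B0_PB[OF c] by blast
    show "\<forall>B :: 'a coeffs. homog_form 4 B \<and> PB B \<noteq> 0 \<longrightarrow>
               finite (crit_locus B) \<and> card (crit_locus B) = 7 \<and>
               (\<forall>v\<in>crit_cone B. reduced_crit_point B v)" using part2 by blast
  qed
qed

end
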